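(* Let $\mathcal H$ be a semi-inner product space of holomorphic functions on $\mathbb D$ with semi-norm $\|\cdot\|$, such that $zf\in\mathcal H$ whenever $f\in\mathcal H$, and $\|zf\|\ge\|f\|$ for all $f\in\mathcal H$. Then for $\lambda\in\mathbb T$ and $0\le r<1$, $$\|(z-\lambda)f\|\le\frac{2}{1+r}\|(z-r\lambda)f\|,\quad f\in\mathcal H.$$
   Context: $\mathbb D$ is the open unit disc and $\mathbb T$ the unit circle. *)

theory Defs
  imports "HOL-Analysis.Analysis"
begin

definition sip_space ::
  "(complex \<Rightarrow> complex) set \<Rightarrow> ((complex \<Rightarrow> complex) \<Rightarrow> (complex \<Rightarrow> complex) \<Rightarrow> complex) \<Rightarrow> bool"
where
  "sip_space H ip \<longleftrightarrow>
     (\<forall>f\<in>H. f holomorphic_on ball 0 1) \<and>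
     (\<lambda>z. 0) \<in> H \<and>
     (\<forall>f\<in>H. \<forall>g\<in>H. (\<lambda>z. f z + g z) \<in> H) \<and>
     (\<forall>c. \<forall>f\<in>H. (\<lambda>z. c * f z) \<in> H) \<and>
     (\<forall>f\<in>H. \<forall>g\<in>H. \<forall>h\<in>H. ip (\<lambda>z. f z + g z) h = ip f h + ip g h) \<and>
     (\<forall>c. \<forall>f\<in>H. \<forall>g\<in>H. ip (\<lambda>z. c * f z) g = c * ip f g) \<and>
     (\<forall>f\<in>H. \<forall>g\<in>H. ip g f = cnj (ip f g)) \<and>
     (\<forall>f\<in>H. Re (ip f f) \<ge> 0)"

definition sip_norm :: "((complex \<Rightarrow> complex) \<Rightarrow> (complex \<Rightarrow> complex) \<Rightarrow> complex) \<Rightarrow> (complex \<Rightarrow> complex) \<Rightarrow> real"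
where "sip_norm ip f = sqrt (Re (ip f f))"

end

theory Submission
  imports Defs
begin

lemma ip_expand:
  assumes S: "sip_space H ip" and f: "f \<in> H" and g: "g \<in> H"
  shows "Re (ip (\<lambda>z. g z + c * f z) (\<lambda>z. g z + c * f z))
         = Re (ip g g) + 2 * Re (cnj c * ip g f) + (cmod c)^2 * Re (ip f f)"
proof -
  have cf: "(\<lambda>z. c * f z) \<in> H" using S f unfolding sip_space_def by blast
  have gc: "(\<lambda>z. g z + c * f z) \<in> H"
  proof -
    have "\<forall>a\<in>H. \<forall>b\<in>H. (\<lambda>z. a z + b z) \<in> H" using S unfolding sip_space_def by blast
    from bspec[OF bspec[OF this g] cf] show ?thesis by simp
  qed
  have add: "\<And>a b h. a \<in> H \<Longrightarrow> b \<in> H \<Longrightarrow> h \<in> H \<Longrightarrow> ip (\<lambda>z. a z + b z) h = ip a h + ip b h"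
    using S unfolding sip_space_def by blast
  have sc: "\<And>d a b. a \<in> H \<Longrightarrow> b \<in> H \<Longrightarrow> ip (\<lambda>z. d * a z) b = d * ip a b"
    using S unfolding sip_space_def by blast
  have herm: "\<And>a b. a \<in> H \<Longrightarrow> b \<in> H \<Longrightarrow> ip b a = cnj (ip a b)"
    using S unfolding sip_space_def by blast
  have e1: "ip (\<lambda>z. g z + c * f z) (\<lambda>z. g z + c * f z)
      = ip g (\<lambda>z. g z + c * f z) + c * ip f (\<lambda>z. g z + c * f z)"
    using add[OF g cf gc] sc[OF f gc] by simp
  have e2: "ip g (\<lambda>z. g z + c * f z) = ip g g + cnj c * ip g f"
  proof -
    have "ip g (\<lambda>z. g z + c * f z) = cnj (ip (\<lambda>z. g z + c * f z) g)" using herm[OF gc g] .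
    also have "\<dots> = cnj (ip g g + c * ip f g)" using add[OF g cf g] sc[OF f g] by simp
    also have "\<dots> = cnj (ip g g) + cnj c * cnj (ip f g)" by simp
    also have "\<dots> = ip g g + cnj c * ip g f" using herm[OF g g] herm[OF g f] by simp
    finally show ?thesis .
  qed
  have e3: "ip f (\<lambda>z. g z + c * f z) = ip f g + cnj c * ip f f"
  proof -
    have "ip f (\<lambda>z. g z + c * f z) = cnj (ip (\<lambda>z. g z + c * f z) f)" using herm[OF gc f] .
    also have "\<dots> = cnj (ip g f + c * ip f f)" using add[OF g cf f] sc[OF f f] by simp
    also have "\<dots> = cnj (ip g f) + cnj c * cnj (ip f f)" by simp
    also have "\<dots> = ip f g + cnj c * ip f f" using herm[OF f g] herm[OF f f] by simp
    finally show ?thesis .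
  qed
  have ipfg: "ip f g = cnj (ip g f)" using herm[OF g f] .
  have ipff: "Im (ip f f) = 0"
  proof -
    have "Im (ip f f) = Im (cnj (ip f f))" using arg_cong[OF herm[OF f f], of Im] .
    thus ?thesis by simp
  qed
  have "ip (\<lambda>z. g z + c * f z) (\<lambda>z. g z + c * f z)
      = ip g g + cnj c * ip g f + c * cnj (ip g f) + c * cnj c * ip f f"
    using e1 e2 e3 ipfg by (simp add: algebra_simps)
  moreover have "Re (c * cnj c * ip f f) = (cmod c)^2 * Re (ip f f)"
  proof -
    have "c * cnj c = of_real ((cmod c)^2)" using complex_norm_square[of c] by simp
    hence e: "c * cnj c * ip f f = of_real ((cmod c)^2) * ip f f" by simp
    have r: "\<And>x w. Re (complex_of_real x * w) = x * Re w" by simp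
    show ?thesis unfolding e r ..
  qed
  moreover have "Re (c * cnj (ip g f)) = Re (cnj c * ip g f)"
  proof -
    have q: "c * cnj (ip g f) = cnj (cnj c * ip g f)" by simp
    show ?thesis using arg_cong[OF q, of Re] by (simp only: complex_cnj_mult[symmetric] cnj.sel)
  qed
  ultimately show ?thesis by simp
qed

theorem lemma2p5:
  fixes H :: "(complex \<Rightarrow> complex) set"
    and ip :: "(complex \<Rightarrow> complex) \<Rightarrow> (complex \<Rightarrow> complex) \<Rightarrow> complex"
    and lam :: complex and r :: real
  assumes "sip_space H ip"
    and "\<forall>f\<in>H. (\<lambda>z. z * f z) \<in> H"
    and "\<forall>f\<in>H. sip_norm ip (\<lambda>z. z * f z) \<ge> sip_norm ip f"
    and "cmod lam = 1" and "0 \<le> r" and "r < 1"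
    and "f \<in> H"
  shows "sip_norm ip (\<lambda>z. (z - lam) * f z)
           \<le> 2 / (1 + r) * sip_norm ip (\<lambda>z. (z - of_real r * lam) * f z)"
proof -
  define g where "g = (\<lambda>z. z * f z)"
  have g: "g \<in> H" using assms(2,7) g_def by blast
  define A where "A = Re (ip g g)"
  define B where "B = Re (ip f f)"
  define t where "t = Re (cnj lam * ip g f)"
  have B0: "B \<ge> 0" using assms(1,7) unfolding sip_space_def B_def by blast
  have "sqrt B \<le> sqrt A" using assms(3,7) unfolding sip_norm_def A_def B_def g_def by blast
  hence AB: "B \<le> A" by simp
  have l1: "(\<lambda>z. (z - lam) * f z) = (\<lambda>z. g z + (- lam) * f z)"
    unfolding g_def by (auto simp: algebra_simps)
  have l2: "(\<lambda>z. (z - of_real r * lam) * f z) = (\<lambda>z. g z + (- (of_real r * lam)) * f z)"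
    unfolding g_def by (auto simp: algebra_simps)
  have L: "Re (ip (\<lambda>z. (z - lam) * f z) (\<lambda>z. (z - lam) * f z)) = A - 2 * t + B"
    unfolding l1 ip_expand[OF assms(1,7) g] A_def B_def t_def using assms(4) by simp
  have R: "Re (ip (\<lambda>z. (z - of_real r * lam) * f z) (\<lambda>z. (z - of_real r * lam) * f z))
       = A - 2 * r * t + r^2 * B"
    unfolding l2 ip_expand[OF assms(1,7) g] A_def B_def t_def using assms(4,5)
    by (simp add: norm_mult power_mult_distrib algebra_simps)
  have P: "A + 2 * t + B \<ge> 0"
  proof -
    have cl: "(\<lambda>z. lam * f z) \<in> H" using assms(1,7) unfolding sip_space_def by blast
    have "\<forall>a\<in>H. \<forall>b\<in>H. (\<lambda>z. a z + b z) \<in> H" using assms(1) unfolding sip_space_def by blast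
    from bspec[OF bspec[OF this g] cl] have "(\<lambda>z. g z + lam * f z) \<in> H" by simp
    hence "Re (ip (\<lambda>z. g z + lam * f z) (\<lambda>z. g z + lam * f z)) \<ge> 0"
      using assms(1) unfolding sip_space_def by blast
    thus ?thesis unfolding ip_expand[OF assms(1,7) g] A_def B_def t_def using assms(4) by simp
  qed
  have id: "4 * (A - 2 * r * t + r^2 * B) - (1 + r)^2 * (A - 2 * t + B)
      = (1 - r) * ((1 - r) * (A + 2 * t + B) + 2 * (1 + r) * (A - B))"
    by (simp add: algebra_simps power2_eq_square)
  have "(1 - r) * ((1 - r) * (A + 2 * t + B) + 2 * (1 + r) * (A - B)) \<ge> 0"
  proof -
    have a: "(1 - r) * (A + 2 * t + B) \<ge> 0" using P assms(6) by simp
    have b: "2 * (1 + r) * (A - B) \<ge> 0" using AB assms(5) by simp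
    show ?thesis using a b assms(6) by simp
  qed
  hence key: "(1 + r)^2 * (A - 2 * t + B) \<le> 4 * (A - 2 * r * t + r^2 * B)" using id by linarith
  have Lnn: "A - 2 * t + B \<ge> 0"
  proof -
    have cl: "(\<lambda>z. (- lam) * f z) \<in> H" using assms(1,7) unfolding sip_space_def by blast
    have "\<forall>a\<in>H. \<forall>b\<in>H. (\<lambda>z. a z + b z) \<in> H" using assms(1) unfolding sip_space_def by blast
    from bspec[OF bspec[OF this g] cl] have "(\<lambda>z. g z + (- lam) * f z) \<in> H" by simp
    hence "Re (ip (\<lambda>z. g z + (- lam) * f z) (\<lambda>z. g z + (- lam) * f z)) \<ge> 0"
      using assms(1) unfolding sip_space_def by blast
    thus ?thesis using L unfolding l1 by simp
  qed
  have "sqrt (A - 2 * t + B) \<le> 2 / (1 + r) * sqrt (A - 2 * r * t + r^2 * B)"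
  proof -
    have "(A - 2 * t + B) \<le> (2 / (1 + r))^2 * (A - 2 * r * t + r^2 * B)"
    proof -
      have pos: "(1 + r)^2 > 0" using assms(5) by simp
      have "(2 / (1 + r))^2 * (A - 2 * r * t + r^2 * B) = 4 * (A - 2 * r * t + r^2 * B) / (1 + r)^2"
        by (simp add: power_divide)
      thus ?thesis using key pos by (simp add: pos_le_divide_eq mult.commute)
    qed
    hence "sqrt (A - 2 * t + B) \<le> sqrt ((2 / (1 + r))^2 * (A - 2 * r * t + r^2 * B))"
      by (rule real_sqrt_le_mono)
    also have "\<dots> = 2 / (1 + r) * sqrt (A - 2 * r * t + r^2 * B)"
      using assms(5) by (simp add: real_sqrt_mult)
    finally show ?thesis .
  qed
  thus ?thesis unfolding sip_norm_def L R .
qed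

end
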